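(* Let $C$ be a connected rack that is finitely generated (but not necessarily finite). Then the assignment $R\mapsto|\mathrm{Mor}_{\mathcal{R}}(C,R)|$, sending a finite rack $R$ to the number of rack morphisms $C\to R$, is an additive invariant of finite racks, and the induced map $$\Phi_C\colon\mathrm{B}(\mathcal{R})\longrightarrow\mathbb{Z},\qquad b(R)\mapsto|\mathrm{Mor}_{\mathcal{R}}(C,R)|,$$ is a homomorphism of commutative rings.
   Context: A rack is a set $R$ with a binary operation $\rhd$ such that every left multiplication $\ell_a\colon b\mapsto a\rhd b$ is a bijection and $a\rhd(b\rhd c)=(a\rhd b)\rhd(a\rhd c)$ for all $a,b,c$; morphisms preserve $\rhd$. The inner automorphism group $\mathrm{Inn}(R)$ is the subgroup of the symmetric group on $R$ generated by all $\ell_a$; a rack is connected if it is non-empty and $\mathrm{Inn}(R)$ acts transitively on $R$. A subrack is a subset $S$ with $\ell_s(S)=S$ for all $s\in S$; a decomposition of $R$ into $S$ and $T$ means $S,T$ are disjoint subracks (possibly empty) with $S\cup T=R$. An additive invariant of finite racks with values in an abelian group $A$ is an assignment $R\mapsto a(R)\in A$ on finite racks with $a(R_1)=a(R_2)$ whenever $R_1\cong R_2$ and $a(R)=a(S)+a(T)$ whenever $R$ decomposes into $S$ and $T$. The Burnside ring of finite racks $\mathrm{B}(\mathcal{R})$ is the abelian group generated by symbols $b(R)$, one for each finite rack $R$, subject to $b(R_1)=b(R_2)$ whenever $R_1\cong R_2$ and $b(R)=b(S)+b(T)$ whenever $R$ decomposes into $S$ and $T$, with ring structure $b(R)b(R')=b(R\times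 R')$ (cartesian product, componentwise operation) and unit the class of the singleton. *)

theory Defs
  imports "HOL-Algebra.Bij" "HOL-Algebra.Generated_Groups"
begin

definition rack :: "'a set \<Rightarrow> ('a \<Rightarrow> 'a \<Rightarrow> 'a) \<Rightarrow> bool" where
  "rack A r \<longleftrightarrow> (\<forall>a\<in>A. bij_betw (r a) A A) \<and>
     (\<forall>a\<in>A. \<forall>b\<in>A. \<forall>c\<in>A. r a (r b c) = r (r a b) (r a c))"

definition left_mult :: "'a set \<Rightarrow> ('a \<Rightarrow> 'a \<Rightarrow> 'a) \<Rightarrow> 'a \<Rightarrow> ('a \<Rightarrow> 'a)" where
  "left_mult A r a = restrict (r a) A"

definition Inn :: "'a set \<Rightarrow> ('a \<Rightarrow> 'a \<Rightarrow> 'a) \<Rightarrow> ('a \<Rightarrow> 'a) set" where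
  "Inn A r = generate (BijGroup A) (left_mult A r ` A)"

definition connected_rack :: "'a set \<Rightarrow> ('a \<Rightarrow> 'a \<Rightarrow> 'a) \<Rightarrow> bool" where
  "connected_rack A r \<longleftrightarrow> rack A r \<and> A \<noteq> {} \<and>
     (\<forall>x\<in>A. \<forall>y\<in>A. \<exists>\<sigma>\<in>Inn A r. \<sigma> x = y)"

definition subrack :: "'a set \<Rightarrow> ('a \<Rightarrow> 'a \<Rightarrow> 'a) \<Rightarrow> 'a set \<Rightarrow> bool" where
  "subrack A r S \<longleftrightarrow> S \<subseteq> A \<and> (\<forall>s\<in>S. r s ` S = S)"

definition generated_subrack :: "'a set \<Rightarrow> ('a \<Rightarrow> 'a \<Rightarrow> 'a) \<Rightarrow> 'a set \<Rightarrow> 'a set" where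
  "generated_subrack A r G = \<Inter>{S. subrack A r S \<and> G \<subseteq> S}"

definition finitely_generated_rack :: "'a set \<Rightarrow> ('a \<Rightarrow> 'a \<Rightarrow> 'a) \<Rightarrow> bool" where
  "finitely_generated_rack A r \<longleftrightarrow>
     (\<exists>G. finite G \<and> G \<subseteq> A \<and> generated_subrack A r G = A)"

definition rack_hom :: "'a set \<Rightarrow> ('a \<Rightarrow> 'a \<Rightarrow> 'a) \<Rightarrow> 'b set \<Rightarrow> ('b \<Rightarrow> 'b \<Rightarrow> 'b) \<Rightarrow> ('a \<Rightarrow> 'b) \<Rightarrow> bool" where
  "rack_hom A r B s h \<longleftrightarrow> h \<in> A \<rightarrow> B \<and> (\<forall>a\<in>A. \<forall>b\<in>A. h (r a b) = s (h a) (h b))"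

definition rack_Mor :: "'a set \<Rightarrow> ('a \<Rightarrow> 'a \<Rightarrow> 'a) \<Rightarrow> 'b set \<Rightarrow> ('b \<Rightarrow> 'b \<Rightarrow> 'b) \<Rightarrow> ('a \<Rightarrow> 'b) set" where
  "rack_Mor A r B s = {h \<in> A \<rightarrow>\<^sub>E B. rack_hom A r B s h}"

definition rack_iso :: "'a set \<Rightarrow> ('a \<Rightarrow> 'a \<Rightarrow> 'a) \<Rightarrow> 'b set \<Rightarrow> ('b \<Rightarrow> 'b \<Rightarrow> 'b) \<Rightarrow> bool" where
  "rack_iso A r B s \<longleftrightarrow> (\<exists>h. bij_betw h A B \<and> rack_hom A r B s h)"

definition rack_decomposition :: "'a set \<Rightarrow> ('a \<Rightarrow> 'a \<Rightarrow> 'a) \<Rightarrow> 'a set \<Rightarrow> 'a set \<Rightarrow> bool" where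
  "rack_decomposition A r S T \<longleftrightarrow> subrack A r S \<and> subrack A r T \<and> S \<inter> T = {} \<and> S \<union> T = A"

definition prod_rack_op :: "('a \<Rightarrow> 'a \<Rightarrow> 'a) \<Rightarrow> ('b \<Rightarrow> 'b \<Rightarrow> 'b) \<Rightarrow> ('a \<times> 'b \<Rightarrow> 'a \<times> 'b \<Rightarrow> 'a \<times> 'b)" where
  "prod_rack_op r s = (\<lambda>(a, b) (c, d). (r a c, s b d))"

definition num_mor :: "'a set \<Rightarrow> ('a \<Rightarrow> 'a \<Rightarrow> 'a) \<Rightarrow> 'b set \<Rightarrow> ('b \<Rightarrow> 'b \<Rightarrow> 'b) \<Rightarrow> int" where
  "num_mor A r B s = int (card (rack_Mor A r B s))"

end

theory Submission
  imports Defs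
begin

lemma lm_Bij:
  assumes "rack C c" "a \<in> C"
  shows "left_mult C c a \<in> Bij C"
  using assms unfolding Bij_def left_mult_def rack_def
  by (auto intro: bij_betw_cong[THEN iffD1, rotated])

lemma gen_invariant:
  assumes rk: "rack C c"
    and step: "\<And>a x. a \<in> C \<Longrightarrow> x \<in> C \<Longrightarrow> P (c a x) = P x"
    and sg: "\<sigma> \<in> generate (BijGroup C) (left_mult C c ` C)"
  shows "\<sigma> \<in> Bij C \<and> (\<forall>x\<in>C. P (\<sigma> x) = P x)"
  using sg
proof (induction rule: generate.induct)
  case one
  have "(\<lambda>x\<in>C. x) \<in> Bij C" by (rule id_Bij)
  then show ?case by (simp add: BijGroup_def restrict_def)
next
  case (incl h)
  then obtain a where a: "a \<in> C" "h = left_mult C c a" by blast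
  have "h \<in> Bij C" using a lm_Bij[OF rk] by blast
  moreover have "\<forall>x\<in>C. P (h x) = P x" using a step by (simp add: left_mult_def)
  ultimately show ?case by blast
next
  case (inv h)
  then obtain a where a: "a \<in> C" "h = left_mult C c a" by blast
  have hb: "h \<in> Bij C" using a lm_Bij[OF rk] by simp
  have bj: "bij_betw (c a) C C" using rk a unfolding rack_def by blast
  have "\<forall>x\<in>C. P (inv_into C h x) = P x"
  proof
    fix x assume x: "x \<in> C"
    have "inv_into C h x = inv_into C (c a) x"
      unfolding inv_into_def left_mult_def a(2) by (rule arg_cong[where f=Eps]) auto
    moreover have "inv_into C (c a) x \<in> C" using bj x
      by (metis bij_betw_def inv_into_into)
    moreover have "c a (inv_into C (c a) x) = x" using bj x
      by (meson bij_betw_inv_into_right)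
    ultimately show "P (inv_into C h x) = P x" using step[OF a(1)] by metis
  qed
  then have "\<forall>x\<in>C. P ((inv\<^bsub>BijGroup C\<^esub> h) x) = P x" by (simp add: inv_BijGroup[OF hb])
  moreover have "inv\<^bsub>BijGroup C\<^esub> h \<in> Bij C"
    using inv_BijGroup[OF hb] restrict_inv_into_Bij[OF hb] by metis
  ultimately show ?case by blast
next
  case (eng h1 h2)
  then have b1: "h1 \<in> Bij C" and b2: "h2 \<in> Bij C" by auto
  have eq: "h1 \<otimes>\<^bsub>BijGroup C\<^esub> h2 = compose C h1 h2" using b1 b2 by (simp add: BijGroup_def)
  have "compose C h1 h2 \<in> Bij C" using b1 b2 by (rule compose_Bij)
  moreover have "\<forall>x\<in>C. P (compose C h1 h2 x) = P x"
    using eng.IH b2 Bij_imp_funcset[OF b2] by (simp add: compose_def Pi_def)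
  ultimately show ?case unfolding eq by blast
qed

lemma decomp_step:
  assumes rk: "rack R r" and d: "rack_decomposition R r S T" and s: "s \<in> R" and y: "y \<in> R"
  shows "(r s y \<in> S) = (y \<in> S)"
proof -
  have bj: "bij_betw (r s) R R" using rk s unfolding rack_def by blast
  have allS: "\<forall>s\<in>S. r s ` S = S"
    using d unfolding rack_decomposition_def subrack_def by (elim conjE) assumption
  have allT: "\<forall>s\<in>T. r s ` T = T"
    using d unfolding rack_decomposition_def subrack_def by (elim conjE) assumption
  have SR: "S \<subseteq> R" "T \<subseteq> R" "S \<inter> T = {}" "S \<union> T = R"
    using d unfolding rack_decomposition_def subrack_def by auto
  have inj: "inj_on (r s) R" using bj unfolding bij_betw_def by (rule conjunct1)
  have ry: "r s y \<in> R" using bj y by (rule bij_betw_apply)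
  have key: "(r s y \<in> X) = (y \<in> X)" if X: "X \<subseteq> R" "r s ` X = X" for X
  proof
    assume "r s y \<in> X"
    then have "r s y \<in> r s ` X" using X(2) by simp
    then obtain z where z: "z \<in> X" "r s y = r s z" by blast
    have zR: "z \<in> R" using z(1) X(1) by blast
    have "y = z" by (rule inj_onD[OF inj z(2) y zR])
    then show "y \<in> X" using z(1) by simp
  next
    assume "y \<in> X"
    then have "r s y \<in> r s ` X" by (rule imageI)
    then show "r s y \<in> X" using X(2) by simp
  qed
  show ?thesis
  proof (cases "s \<in> S")
    case True
    then have im: "r s ` S = S" using allS by (rule bspec[rotated])
    show ?thesis by (rule key[OF SR(1) im])
  next
    case False
    then have sT: "s \<in> T" using SR s by blast
    then have im: "r s ` T = T" using allT by (rule bspec[rotated])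
    have yT: "(r s y \<in> T) = (y \<in> T)" by (rule key[OF SR(2) im])
    show ?thesis using yT y ry SR by blast
  qed
qed

lemma hom_image_side:
  assumes rkC: "rack C c" and con: "connected_rack C c" and rk: "rack R r"
    and d: "rack_decomposition R r S T" and h: "h \<in> rack_Mor C c R r"
  shows "h ` C \<subseteq> S \<or> h ` C \<subseteq> T"
proof -
  have hR: "\<And>x. x \<in> C \<Longrightarrow> h x \<in> R" using h unfolding rack_Mor_def by auto
  have hh: "\<And>a x. a \<in> C \<Longrightarrow> x \<in> C \<Longrightarrow> h (c a x) = r (h a) (h x)"
    using h unfolding rack_Mor_def rack_hom_def by auto
  have step: "(h (c a x) \<in> S) = (h x \<in> S)" if ax: "a \<in> C" "x \<in> C" for a x
  proof -
    have "h (c a x) = r (h a) (h x)" by (rule hh[OF ax])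
    also have "(\<dots> \<in> S) = (h x \<in> S)" by (rule decomp_step[OF rk d hR[OF ax(1)] hR[OF ax(2)]])
    finally show ?thesis .
  qed
  obtain x0 where x0: "x0 \<in> C" using con unfolding connected_rack_def by blast
  have all: "\<And>y. y \<in> C \<Longrightarrow> (h y \<in> S) = (h x0 \<in> S)"
  proof -
    fix y assume y: "y \<in> C"
    then obtain \<sigma> where sg: "\<sigma> \<in> Inn C c" "\<sigma> x0 = y" using con x0 unfolding connected_rack_def by blast
    have "\<sigma> \<in> generate (BijGroup C) (left_mult C c ` C)" using sg(1) unfolding Inn_def .
    note gi = gen_invariant[of C c "\<lambda>x. h x \<in> S" \<sigma>, OF rkC step this]
    then have "\<forall>x\<in>C. (h (\<sigma> x) \<in> S) = (h x \<in> S)" by (rule conjunct2)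
    then have "(h (\<sigma> x0) \<in> S) = (h x0 \<in> S)" using x0 by blast
    then show "(h y \<in> S) = (h x0 \<in> S)" using sg(2) by simp
  qed
  have SR: "S \<inter> T = {}" "S \<union> T = R" using d unfolding rack_decomposition_def by auto
  show ?thesis
  proof (cases "h x0 \<in> S")
    case True
    have "h ` C \<subseteq> S"
    proof
      fix z assume "z \<in> h ` C"
      then obtain y where "y \<in> C" "z = h y" by blast
      then show "z \<in> S" using all True by simp
    qed
    then show ?thesis by (rule disjI1)
  next
    case False
    have "h ` C \<subseteq> T"
    proof
      fix z assume "z \<in> h ` C"
      then obtain y where y: "y \<in> C" "z = h y" by blast
      then have "h y \<notin> S" using all False by simp
      moreover have "h y \<in> R" using hR y(1) .
      ultimately show "z \<in> T" using SR y(2) by blast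
    qed
    then show ?thesis by (rule disjI2)
  qed
qed

lemma mor_determined:
  assumes rkC: "rack C c" and rk: "rack R r" and G: "G \<subseteq> C" "generated_subrack C c G = C"
    and h: "h \<in> rack_Mor C c R r" and h': "h' \<in> rack_Mor C c R r" and eq: "\<forall>x\<in>G. h x = h' x"
  shows "h = h'"
proof -
  define E where "E = {x \<in> C. h x = h' x}"
  have hR: "\<And>x. x \<in> C \<Longrightarrow> h x \<in> R" "\<And>x. x \<in> C \<Longrightarrow> h' x \<in> R" using h h' unfolding rack_Mor_def by auto
  have hh: "\<And>a x. a \<in> C \<Longrightarrow> x \<in> C \<Longrightarrow> h (c a x) = r (h a) (h x)"
    "\<And>a x. a \<in> C \<Longrightarrow> x \<in> C \<Longrightarrow> h' (c a x) = r (h' a) (h' x)"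
    using h h' unfolding rack_Mor_def rack_hom_def by auto
  have "subrack C c E"
    unfolding subrack_def
  proof (intro conjI ballI)
    show "E \<subseteq> C" unfolding E_def by blast
  next
    fix s assume s: "s \<in> E"
    have sC: "s \<in> C" and hs: "h s = h' s" using s unfolding E_def by auto
    have bj: "bij_betw (c s) C C" using rkC sC unfolding rack_def by blast
    have bjR: "inj_on (r (h s)) R" using rk hR(1)[OF sC] unfolding rack_def bij_betw_def by blast
    show "c s ` E = E"
    proof
      show "c s ` E \<subseteq> E"
      proof
        fix z assume "z \<in> c s ` E"
        then obtain u where u: "u \<in> E" "z = c s u" by blast
        have uC: "u \<in> C" and hu: "h u = h' u" using u(1) unfolding E_def by auto
        have zC: "c s u \<in> C" using bj uC by (rule bij_betw_apply)
        have "h (c s u) = h' (c s u)" using hh(1)[OF sC uC] hh(2)[OF sC uC] hs hu by simp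
        then show "z \<in> E" using zC u(2) unfolding E_def by simp
      qed
    next
      show "E \<subseteq> c s ` E"
      proof
        fix t assume t: "t \<in> E"
        then have tC: "t \<in> C" unfolding E_def by auto
        have "c s ` C = C" using bj by (simp add: bij_betw_def)
        then have "t \<in> c s ` C" using tC by simp
        then obtain u where u: "u \<in> C" "c s u = t" by blast
        have "r (h s) (h u) = r (h s) (h' u)" using hh[OF sC u(1)] hs u t unfolding E_def by auto
        then have "h u = h' u" using bjR hR u(1) by (meson inj_onD)
        then show "t \<in> c s ` E" using u unfolding E_def by blast
      qed
    qed
  qed
  moreover have "G \<subseteq> E" using G eq unfolding E_def by auto
  ultimately have "generated_subrack C c G \<subseteq> E" unfolding generated_subrack_def
    by (intro Inter_lower) simp
  then have CE: "C \<subseteq> E" using G(2) by simp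
  have ex: "h \<in> extensional C" "h' \<in> extensional C" using h h' unfolding rack_Mor_def PiE_iff by auto
  show ?thesis
  proof (rule extensionalityI[OF ex])
    fix x assume "x \<in> C" then show "h x = h' x" using CE unfolding E_def by blast
  qed
qed

lemma finite_Mor:
  assumes rkC: "rack C c" and fg: "finitely_generated_rack C c" and rk: "rack R r" and fin: "finite R"
  shows "finite (rack_Mor C c R r)"
proof -
  obtain G where G: "finite G" "G \<subseteq> C" "generated_subrack C c G = C"
    using fg unfolding finitely_generated_rack_def by blast
  have "inj_on (\<lambda>h. restrict h G) (rack_Mor C c R r)"
  proof (rule inj_onI)
    fix h h' assume "h \<in> rack_Mor C c R r" "h' \<in> rack_Mor C c R r" "restrict h G = restrict h' G"
    then show "h = h'" using mor_determined[OF rkC rk G(2,3)] by (metis restrict_apply')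
  qed
  moreover have "(\<lambda>h. restrict h G) ` rack_Mor C c R r \<subseteq> G \<rightarrow>\<^sub>E R"
    using G(2) unfolding rack_Mor_def by auto
  moreover have "finite (G \<rightarrow>\<^sub>E R)" using G(1) fin by (rule finite_PiE)
  ultimately show ?thesis by (meson finite_imageD finite_subset)
qed

lemma Mor_cC:
  assumes "rack C c" "a \<in> C" "x \<in> C" shows "c a x \<in> C"
  using assms unfolding rack_def by (metis bij_betw_apply)

lemma compose_Mor:
  assumes rkC: "rack C c" and phi: "rack_hom R1 r1 R2 r2 \<phi>" and h: "h \<in> rack_Mor C c R1 r1"
  shows "restrict (\<lambda>x. \<phi> (h x)) C \<in> rack_Mor C c R2 r2"
proof -
  have hR: "\<And>x. x \<in> C \<Longrightarrow> h x \<in> R1" using h unfolding rack_Mor_def by auto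
  have hh: "\<And>a x. a \<in> C \<Longrightarrow> x \<in> C \<Longrightarrow> h (c a x) = r1 (h a) (h x)"
    using h unfolding rack_Mor_def rack_hom_def by auto
  have pR: "\<And>x. x \<in> R1 \<Longrightarrow> \<phi> x \<in> R2" using phi unfolding rack_hom_def by auto
  have ph: "\<And>a x. a \<in> R1 \<Longrightarrow> x \<in> R1 \<Longrightarrow> \<phi> (r1 a x) = r2 (\<phi> a) (\<phi> x)"
    using phi unfolding rack_hom_def by auto
  show ?thesis unfolding rack_Mor_def rack_hom_def
    using hR hh pR ph Mor_cC[OF rkC] by auto
qed

lemma iso_part:
  assumes rkC: "rack C c" and rk1: "rack R1 r1" and iso: "rack_iso R1 r1 R2 r2"
  shows "num_mor C c R1 r1 = num_mor C c R2 r2"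
proof -
  obtain \<phi> where bj: "bij_betw \<phi> R1 R2" and phi: "rack_hom R1 r1 R2 r2 \<phi>"
    using iso unfolding rack_iso_def by blast
  define \<psi> where "\<psi> = inv_into R1 \<phi>"
  have bj': "bij_betw \<psi> R2 R1" unfolding \<psi>_def using bj by (rule bij_betw_inv_into)
  have psi: "rack_hom R2 r2 R1 r1 \<psi>"
    unfolding rack_hom_def
  proof (intro conjI ballI)
    show "\<psi> \<in> R2 \<rightarrow> R1" using bj' by (rule bij_betw_imp_funcset)
  next
    fix a b assume a: "a \<in> R2" and b: "b \<in> R2"
    have pa: "\<psi> a \<in> R1" "\<psi> b \<in> R1" using bij_betw_apply[OF bj' a] bij_betw_apply[OF bj' b] .
    have ra: "r1 (\<psi> a) (\<psi> b) \<in> R1" using Mor_cC[OF rk1 pa] .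
    have e1: "\<phi> (\<psi> a) = a" "\<phi> (\<psi> b) = b" unfolding \<psi>_def
      using bij_betw_inv_into_right[OF bj a] bij_betw_inv_into_right[OF bj b] .
    have "\<phi> (r1 (\<psi> a) (\<psi> b)) = r2 (\<phi> (\<psi> a)) (\<phi> (\<psi> b))" using phi pa unfolding rack_hom_def by blast
    then have "\<phi> (r1 (\<psi> a) (\<psi> b)) = r2 a b" unfolding e1 .
    then have "\<psi> (r2 a b) = \<psi> (\<phi> (r1 (\<psi> a) (\<psi> b)))" by simp
    also have "\<dots> = r1 (\<psi> a) (\<psi> b)" using bij_betw_inv_into_left[OF bj ra] unfolding \<psi>_def .
    finally show "\<psi> (r2 a b) = r1 (\<psi> a) (\<psi> b)" .
  qed
  have "bij_betw (\<lambda>h. restrict (\<lambda>x. \<phi> (h x)) C) (rack_Mor C c R1 r1) (rack_Mor C c R2 r2)"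
  proof (rule bij_betw_byWitness[where f'="\<lambda>h. restrict (\<lambda>x. \<psi> (h x)) C"])
    show "\<forall>h\<in>rack_Mor C c R1 r1. restrict (\<lambda>x. \<psi> (restrict (\<lambda>x. \<phi> (h x)) C x)) C = h"
    proof
      fix h assume h: "h \<in> rack_Mor C c R1 r1"
      then have hE: "h \<in> C \<rightarrow>\<^sub>E R1" unfolding rack_Mor_def by simp
      show "restrict (\<lambda>x. \<psi> (restrict (\<lambda>x. \<phi> (h x)) C x)) C = h"
      proof (rule extensionalityI[where A=C])
        fix x assume x: "x \<in> C"
        then have "h x \<in> R1" using hE by auto
        then show "restrict (\<lambda>x. \<psi> (restrict (\<lambda>x. \<phi> (h x)) C x)) C x = h x"
          using x bj unfolding \<psi>_def by (simp add: bij_betw_inv_into_left)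
      qed (use hE in \<open>auto simp: PiE_iff\<close>)
    qed
    show "\<forall>h\<in>rack_Mor C c R2 r2. restrict (\<lambda>x. \<phi> (restrict (\<lambda>x. \<psi> (h x)) C x)) C = h"
    proof
      fix h assume h: "h \<in> rack_Mor C c R2 r2"
      then have hE: "h \<in> C \<rightarrow>\<^sub>E R2" unfolding rack_Mor_def by simp
      show "restrict (\<lambda>x. \<phi> (restrict (\<lambda>x. \<psi> (h x)) C x)) C = h"
      proof (rule extensionalityI[where A=C])
        fix x assume x: "x \<in> C"
        then have "h x \<in> R2" using hE by auto
        then show "restrict (\<lambda>x. \<phi> (restrict (\<lambda>x. \<psi> (h x)) C x)) C x = h x"
          using x bj unfolding \<psi>_def by (simp add: bij_betw_inv_into_right)
      qed (use hE in \<open>auto simp: PiE_iff\<close>)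
    qed
    show "(\<lambda>h. restrict (\<lambda>x. \<phi> (h x)) C) ` rack_Mor C c R1 r1 \<subseteq> rack_Mor C c R2 r2"
      using compose_Mor[OF rkC phi] by blast
    show "(\<lambda>h. restrict (\<lambda>x. \<psi> (h x)) C) ` rack_Mor C c R2 r2 \<subseteq> rack_Mor C c R1 r1"
      using compose_Mor[OF rkC psi] by blast
  qed
  then show ?thesis unfolding num_mor_def by (simp add: bij_betw_same_card)
qed

theorem proposition5p1:
  fixes C :: "'a set" and c :: "'a \<Rightarrow> 'a \<Rightarrow> 'a"
  assumes "rack C c" and "connected_rack C c" and "finitely_generated_rack C c"
  shows
    \<comment> \<open>additive invariant: isomorphism invariance\<close>
    "(\<forall>(R1 :: 'b set) r1 (R2 :: 'c set) r2.
        finite R1 \<and> rack R1 r1 \<and> finite R2 \<and> rack R2 r2 \<and> rack_iso R1 r1 R2 r2 \<longrightarrow>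
        num_mor C c R1 r1 = num_mor C c R2 r2)
   \<and> \<comment> \<open>additive invariant: additivity on decompositions\<close>
     (\<forall>(R :: 'b set) r S T.
        finite R \<and> rack R r \<and> rack_decomposition R r S T \<longrightarrow>
        num_mor C c R r = num_mor C c S r + num_mor C c T r)
   \<and> \<comment> \<open>induced map preserves products\<close>
     (\<forall>(R :: 'b set) r (R' :: 'c set) r'.
        finite R \<and> rack R r \<and> finite R' \<and> rack R' r' \<longrightarrow>
        num_mor C c (R \<times> R') (prod_rack_op r r') = num_mor C c R r * num_mor C c R' r')
   \<and> \<comment> \<open>induced map preserves the unit (class of the singleton rack)\<close>
     (\<forall>x :: 'd. num_mor C c {x} (\<lambda>_ _. x) = 1)"
proof (intro conjI allI impI)
  fix R1 :: "'b set" and r1 and R2 :: "'c set" and r2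
  assume "finite R1 \<and> rack R1 r1 \<and> finite R2 \<and> rack R2 r2 \<and> rack_iso R1 r1 R2 r2"
  then show "num_mor C c R1 r1 = num_mor C c R2 r2" using iso_part[OF assms(1)] by blast
next
  fix R :: "'b set" and r S T
  assume a: "finite R \<and> rack R r \<and> rack_decomposition R r S T"
  then have fin: "finite R" and rk: "rack R r" and d: "rack_decomposition R r S T" by auto
  have SR1: "S \<subseteq> R" using d unfolding rack_decomposition_def subrack_def by (elim conjE) assumption
  have SR2: "T \<subseteq> R" using d unfolding rack_decomposition_def subrack_def by (elim conjE) assumption
  have SR3: "S \<inter> T = {}" using d unfolding rack_decomposition_def by (elim conjE) assumption
  note SR = SR1 SR2 SR3
  have sub: "rack_Mor C c S r \<subseteq> rack_Mor C c R r" "rack_Mor C c T r \<subseteq> rack_Mor C c R r"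
    using SR(1,2) unfolding rack_Mor_def rack_hom_def by (auto simp: PiE_iff)
  have finR: "finite (rack_Mor C c R r)" by (rule finite_Mor[OF assms(1) assms(3) rk fin])
  have un: "rack_Mor C c R r = rack_Mor C c S r \<union> rack_Mor C c T r"
  proof
    show "rack_Mor C c R r \<subseteq> rack_Mor C c S r \<union> rack_Mor C c T r"
    proof
      fix h assume h: "h \<in> rack_Mor C c R r"
      have "h ` C \<subseteq> S \<or> h ` C \<subseteq> T" by (rule hom_image_side[OF assms(1,2) rk d h])
      then show "h \<in> rack_Mor C c S r \<union> rack_Mor C c T r"
        using h unfolding rack_Mor_def rack_hom_def by (auto simp: PiE_iff)
    qed
  qed (use sub in blast)
  obtain x0 where x0: "x0 \<in> C" using assms(2) unfolding connected_rack_def by blast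
  have dis: "rack_Mor C c S r \<inter> rack_Mor C c T r = {}"
  proof (rule ccontr)
    assume "rack_Mor C c S r \<inter> rack_Mor C c T r \<noteq> {}"
    then obtain h where "h \<in> rack_Mor C c S r" "h \<in> rack_Mor C c T r" by blast
    then have "h x0 \<in> S" "h x0 \<in> T" using x0 unfolding rack_Mor_def by auto
    then show False using SR(3) by blast
  qed
  have fS: "finite (rack_Mor C c S r)" using finR sub(1) by (rule finite_subset[rotated])
  have fT: "finite (rack_Mor C c T r)" using finR sub(2) by (rule finite_subset[rotated])
  have "card (rack_Mor C c R r) = card (rack_Mor C c S r) + card (rack_Mor C c T r)"
    unfolding un by (rule card_Un_disjoint[OF fS fT dis])
  then show "num_mor C c R r = num_mor C c S r + num_mor C c T r" unfolding num_mor_def by simp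
next
  fix R :: "'b set" and r and R' :: "'c set" and r'
  define F :: "('a \<Rightarrow> 'b \<times> 'c) \<Rightarrow> ('a \<Rightarrow> 'b) \<times> ('a \<Rightarrow> 'c)" where "F = (\<lambda>h. (restrict (\<lambda>x. fst (h x)) C, restrict (\<lambda>x. snd (h x)) C))"
  define G :: "('a \<Rightarrow> 'b) \<times> ('a \<Rightarrow> 'c) \<Rightarrow> ('a \<Rightarrow> 'b \<times> 'c)" where "G = (\<lambda>p. restrict (\<lambda>x. (fst p x, snd p x)) C)"
  have "bij_betw F (rack_Mor C c (R \<times> R') (prod_rack_op r r')) (rack_Mor C c R r \<times> rack_Mor C c R' r')"
  proof (rule bij_betw_byWitness[where f'=G])
    show "\<forall>h\<in>rack_Mor C c (R \<times> R') (prod_rack_op r r'). G (F h) = h"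
    proof
      fix h assume "h \<in> rack_Mor C c (R \<times> R') (prod_rack_op r r')"
      then have "h \<in> extensional C" unfolding rack_Mor_def PiE_iff by simp
      then show "G (F h) = h" unfolding F_def G_def by (auto intro!: extensionalityI[where A=C])
    qed
    show "\<forall>p\<in>rack_Mor C c R r \<times> rack_Mor C c R' r'. F (G p) = p"
    proof
      fix p assume p: "p \<in> rack_Mor C c R r \<times> rack_Mor C c R' r'"
      obtain f g where fg: "p = (f, g)" by fastforce
      have "f \<in> extensional C" "g \<in> extensional C" using p fg unfolding rack_Mor_def PiE_iff by auto
      then show "F (G p) = p" unfolding F_def G_def fg by (auto intro!: extensionalityI[where A=C])
    qed
    show "F ` rack_Mor C c (R \<times> R') (prod_rack_op r r') \<subseteq> rack_Mor C c R r \<times> rack_Mor C c R' r'"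
    proof
      fix q assume "q \<in> F ` rack_Mor C c (R \<times> R') (prod_rack_op r r')"
      then obtain h where h: "h \<in> rack_Mor C c (R \<times> R') (prod_rack_op r r')" and q: "q = F h" by blast
      have hR: "\<And>x. x \<in> C \<Longrightarrow> h x \<in> R \<times> R'" using h unfolding rack_Mor_def by auto
      have hh: "\<And>a x. a \<in> C \<Longrightarrow> x \<in> C \<Longrightarrow> h (c a x) = prod_rack_op r r' (h a) (h x)"
        using h unfolding rack_Mor_def rack_hom_def by auto
      have hh1: "fst (h (c a x)) = r (fst (h a)) (fst (h x))" and
           hh2: "snd (h (c a x)) = r' (snd (h a)) (snd (h x))" if "a \<in> C" "x \<in> C" for a x
        using hh[OF that] unfolding prod_rack_op_def by (auto split: prod.splits)
      show "q \<in> rack_Mor C c R r \<times> rack_Mor C c R' r'"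
        unfolding q F_def rack_Mor_def rack_hom_def using hR hh1 hh2 Mor_cC[OF assms(1)]
        by (auto simp: mem_Times_iff)
    qed
    show "G ` (rack_Mor C c R r \<times> rack_Mor C c R' r') \<subseteq> rack_Mor C c (R \<times> R') (prod_rack_op r r')"
      unfolding G_def rack_Mor_def rack_hom_def prod_rack_op_def
      using Mor_cC[OF assms(1)] by (auto simp: PiE_iff)
  qed
  then have "card (rack_Mor C c (R \<times> R') (prod_rack_op r r')) = card (rack_Mor C c R r \<times> rack_Mor C c R' r')"
    by (rule bij_betw_same_card)
  then show "num_mor C c (R \<times> R') (prod_rack_op r r') = num_mor C c R r * num_mor C c R' r'"
    unfolding num_mor_def by (simp add: card_cartesian_product)
next
  fix x :: 'd
  have "rack_Mor C c {x} (\<lambda>_ _. x) = {restrict (\<lambda>_. x) C}"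
    unfolding rack_Mor_def rack_hom_def using Mor_cC[OF assms(1)]
    by (auto simp: PiE_iff intro!: extensionalityI[where A=C])
  then show "num_mor C c {x} (\<lambda>_ _. x) = 1" unfolding num_mor_def by simp
qed

end
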